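(* Let $P$ be a finite semipure poset of length $n$ having both a unique minimum element $\hat 0$ and a unique maximum element, $t\ge1$, $\lambda_P:\mathrm{Cov}(\hat P)\to L_P$ an EL-labeling, and $\lambda$ the induced EL-labeling of $\widehat{P*T_{t,n}}$, restricted to the interval $(P*T_{t,n})^+=[(\hat 0,\hat 0_T),\hat 1]$. Then the number of ascent free maximal chains of $(P*T_{t,n})^+$ equals $$\sum_{\substack{w\in\mathrm{NDA}_n(L_P)\\ w_{n-1}\not\le w_n}} c(w)\,t^{\mathrm{asc}(w)+1}(1+t)^{n-1-2\,\mathrm{asc}(w)},$$ where $c(w)$ is the number of maximal chains of $P$ whose label sequence under $\lambda_P$ (restricted to $\mathrm{Cov}(P)$) is $w$.
   Context: Rees product $P*Q$ of semipure posets (rank $r_P(x)$ = common length of maximal chains of $P_{\le x}$): the set $\{(p,q): r_P(p)\ge r_Q(q)\}$ with $(p_1,q_1)\le(p_2,q_2)$ iff $p_1\le p_2$, $q_1\le q_2$, $r_P(p_2)-r_P(p_1)\ge r_Q(q_2)-r_Q(q_1)$. $T_{t,n}$: sequences over $\{1,\dots,t\}$ of length $\le n$ ordered by prefix, minimum $\hat 0_T$, rank = length. $\hat Q$: $Q$ with a new minimum and new maximum adjoined (even if $Q$ already has them); for $\hat P$ these are $\hat 0_P,\hat 1_P$. $Q^+$ denotes $Q$ with a new maximum adjoined; $(P*T_{t,n})^+$ is identified with the interval $[(\hat 0,\hat 0_T),\hat 1]$ of $\widehat{P*T_{t,n}}$. An edge labeling $\lambda:\mathrm{Cov}(Q)\to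 L$ of a bounded poset is an EL-labeling if each interval $[x,y]$ has a unique maximal chain with weakly increasing labels and its label sequence lexicographically precedes those of all other maximal chains of $[x,y]$. The induced labeling $\lambda$ of $\widehat{P*T_{t,n}}$ takes values in $L_P\times\{0<1\}$ (product order): the minimum is identified with $(\hat 0_P,\hat 0_T)$; for a cover $(x,k)\lessdot(y,l)$ with $(y,l)\ne\hat 1$, $\lambda=(\lambda_P(x,y),1)$ if $k<l$ and $(\lambda_P(x,y),0)$ if $k=l$; for $(x,k)\lessdot\hat 1$, $\lambda=(\lambda_P(x,\hat 1_P),0)$. A maximal chain is ascent free if no two consecutive labels $a,b$ satisfy $a\le b$. For a word $w$ of length $N$ over a poset $A$: $i\in[N-1]$ is an ascent if $w_i\le w_{i+1}$; $\mathrm{asc}(w)$ counts ascents; a double ascent is $i\in[N-2]$ with $w_i\le w_{i+1}\le w_{i+2}$; $\mathrm{NDA}_N(A)$ is the set of length-$N$ words over $A$ without double ascents. *)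

theory Defs
  imports Main "HOL-Library.Sublist"
begin

definition po_on :: "'a set \<Rightarrow> ('a \<Rightarrow> 'a \<Rightarrow> bool) \<Rightarrow> bool" where
  "po_on S le \<longleftrightarrow> (\<forall>x\<in>S. le x x) \<and> (\<forall>x\<in>S. \<forall>y\<in>S. le x y \<and> le y x \<longrightarrow> x = y)
     \<and> (\<forall>x\<in>S. \<forall>y\<in>S. \<forall>z\<in>S. le x y \<and> le y z \<longrightarrow> le x z)"

definition covers :: "'a set \<Rightarrow> ('a \<Rightarrow> 'a \<Rightarrow> bool) \<Rightarrow> 'a \<Rightarrow> 'a \<Rightarrow> bool" where
  "covers S le x y \<longleftrightarrow> x \<in> S \<and> y \<in> S \<and> le x y \<and> x \<noteq> y
     \<and> \<not> (\<exists>z\<in>S. le x z \<and> le z y \<and> z \<noteq> x \<and> z \<noteq> y)"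

definition cover_chain :: "'a set \<Rightarrow> ('a \<Rightarrow> 'a \<Rightarrow> bool) \<Rightarrow> 'a list \<Rightarrow> bool" where
  "cover_chain S le c \<longleftrightarrow> c \<noteq> [] \<and> set c \<subseteq> S
     \<and> (\<forall>i. Suc i < length c \<longrightarrow> covers S le (c ! i) (c ! Suc i))"

definition mchains :: "'a set \<Rightarrow> ('a \<Rightarrow> 'a \<Rightarrow> bool) \<Rightarrow> 'a \<Rightarrow> 'a \<Rightarrow> 'a list set" where
  "mchains S le x y = {c. cover_chain S le c \<and> hd c = x \<and> last c = y}"

definition pminimal :: "'a set \<Rightarrow> ('a \<Rightarrow> 'a \<Rightarrow> bool) \<Rightarrow> 'a \<Rightarrow> bool" where
  "pminimal S le x \<longleftrightarrow> x \<in> S \<and> (\<forall>y\<in>S. le y x \<longrightarrow> y = x)"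

definition pmaximal :: "'a set \<Rightarrow> ('a \<Rightarrow> 'a \<Rightarrow> bool) \<Rightarrow> 'a \<Rightarrow> bool" where
  "pmaximal S le x \<longleftrightarrow> x \<in> S \<and> (\<forall>y\<in>S. le x y \<longrightarrow> y = x)"

definition maxchains :: "'a set \<Rightarrow> ('a \<Rightarrow> 'a \<Rightarrow> bool) \<Rightarrow> 'a list set" where
  "maxchains S le = {c. cover_chain S le c \<and> pminimal S le (hd c) \<and> pmaximal S le (last c)}"

definition downset :: "'a set \<Rightarrow> ('a \<Rightarrow> 'a \<Rightarrow> bool) \<Rightarrow> 'a \<Rightarrow> 'a set" where
  "downset S le x = {y \<in> S. le y x}"

definition semipure :: "'a set \<Rightarrow> ('a \<Rightarrow> 'a \<Rightarrow> bool) \<Rightarrow> bool" where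
  "semipure S le \<longleftrightarrow> (\<forall>x\<in>S. \<forall>c\<in>maxchains (downset S le x) le.
       \<forall>c'\<in>maxchains (downset S le x) le. length c = length c')"

definition prank :: "'a set \<Rightarrow> ('a \<Rightarrow> 'a \<Rightarrow> bool) \<Rightarrow> 'a \<Rightarrow> nat" where
  "prank S le x = length (SOME c. c \<in> maxchains (downset S le x) le) - 1"

definition is_chain :: "'a set \<Rightarrow> ('a \<Rightarrow> 'a \<Rightarrow> bool) \<Rightarrow> 'a list \<Rightarrow> bool" where
  "is_chain S le c \<longleftrightarrow> set c \<subseteq> S
     \<and> (\<forall>i. Suc i < length c \<longrightarrow> le (c ! i) (c ! Suc i) \<and> c ! i \<noteq> c ! Suc i)"

definition poset_length :: "'a set \<Rightarrow> ('a \<Rightarrow> 'a \<Rightarrow> bool) \<Rightarrow> nat" where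
  "poset_length S le = Max {length c - 1 | c. c \<noteq> [] \<and> is_chain S le c}"

datatype 'a ext = Bot | El 'a | Top

fun ext_le :: "('a \<Rightarrow> 'a \<Rightarrow> bool) \<Rightarrow> 'a ext \<Rightarrow> 'a ext \<Rightarrow> bool" where
  "ext_le le Bot _ = True"
| "ext_le le _ Top = True"
| "ext_le le (El x) (El y) = le x y"
| "ext_le le _ _ = False"

definition hat_set :: "'a set \<Rightarrow> 'a ext set" where
  "hat_set S = {Bot, Top} \<union> El ` S"

definition plus_set :: "'a set \<Rightarrow> 'a ext set" where
  "plus_set S = El ` S \<union> {Top}"

definition labels :: "('a \<Rightarrow> 'a \<Rightarrow> 'l) \<Rightarrow> 'a list \<Rightarrow> 'l list" where
  "labels lam c = map (\<lambda>i. lam (c ! i) (c ! Suc i)) [0..<length c - 1]"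

definition weakly_inc :: "('l \<Rightarrow> 'l \<Rightarrow> bool) \<Rightarrow> 'l list \<Rightarrow> bool" where
  "weakly_inc lle ls \<longleftrightarrow> (\<forall>i. Suc i < length ls \<longrightarrow> lle (ls ! i) (ls ! Suc i))"

definition lex_prec :: "('l \<Rightarrow> 'l \<Rightarrow> bool) \<Rightarrow> 'l list \<Rightarrow> 'l list \<Rightarrow> bool" where
  "lex_prec lle xs ys \<longleftrightarrow> (\<exists>i. i < length xs \<and> i < length ys \<and> take i xs = take i ys
       \<and> lle (xs ! i) (ys ! i) \<and> xs ! i \<noteq> ys ! i)"

definition EL_labeling :: "'a set \<Rightarrow> ('a \<Rightarrow> 'a \<Rightarrow> bool) \<Rightarrow> 'l set \<Rightarrow> ('l \<Rightarrow> 'l \<Rightarrow> bool)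
    \<Rightarrow> ('a \<Rightarrow> 'a \<Rightarrow> 'l) \<Rightarrow> bool" where
  "EL_labeling Q le L lle lam \<longleftrightarrow>
     (\<forall>x y. covers Q le x y \<longrightarrow> lam x y \<in> L) \<and>
     (\<forall>x\<in>Q. \<forall>y\<in>Q. le x y \<longrightarrow>
        (\<exists>!c. c \<in> mchains Q le x y \<and> weakly_inc lle (labels lam c)) \<and>
        (\<forall>c\<in>mchains Q le x y. weakly_inc lle (labels lam c) \<longrightarrow>
           (\<forall>c'\<in>mchains Q le x y. c' \<noteq> c \<longrightarrow> lex_prec lle (labels lam c) (labels lam c'))))"

definition tset :: "nat \<Rightarrow> nat \<Rightarrow> nat list set" where
  "tset t n = {s. set s \<subseteq> {1..t} \<and> length s \<le> n}"

definition rees_set :: "'a set \<Rightarrow> ('a \<Rightarrow> nat) \<Rightarrow> 'b set \<Rightarrow> ('b \<Rightarrow> nat) \<Rightarrow> ('a \<times> 'b) set" where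
  "rees_set S rS Q rQ = {(p, q). p \<in> S \<and> q \<in> Q \<and> rS p \<ge> rQ q}"

definition rees_le :: "('a \<Rightarrow> 'a \<Rightarrow> bool) \<Rightarrow> ('a \<Rightarrow> nat) \<Rightarrow> ('b \<Rightarrow> 'b \<Rightarrow> bool) \<Rightarrow> ('b \<Rightarrow> nat)
    \<Rightarrow> 'a \<times> 'b \<Rightarrow> 'a \<times> 'b \<Rightarrow> bool" where
  "rees_le leS rS leQ rQ pq1 pq2 \<longleftrightarrow>
     leS (fst pq1) (fst pq2) \<and> leQ (snd pq1) (snd pq2) \<and>
     int (rS (fst pq2)) - int (rS (fst pq1)) \<ge> int (rQ (snd pq2)) - int (rQ (snd pq1))"

fun ind_lab :: "('a ext \<Rightarrow> 'a ext \<Rightarrow> 'l) \<Rightarrow> ('a \<times> nat list) ext \<Rightarrow> ('a \<times> nat list) ext \<Rightarrow> 'l \<times> nat" where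
  "ind_lab lamP (El (x, k)) (El (y, l)) = (lamP (El x) (El y), if strict_prefix k l then 1 else 0)"
| "ind_lab lamP (El (x, k)) Top = (lamP (El x) Top, 0)"
| "ind_lab lamP _ _ = undefined"

definition prod_le :: "('l \<Rightarrow> 'l \<Rightarrow> bool) \<Rightarrow> 'l \<times> nat \<Rightarrow> 'l \<times> nat \<Rightarrow> bool" where
  "prod_le lle a b \<longleftrightarrow> lle (fst a) (fst b) \<and> snd a \<le> snd b"

definition ascent_free :: "('l \<Rightarrow> 'l \<Rightarrow> bool) \<Rightarrow> 'l list \<Rightarrow> bool" where
  "ascent_free lle ls \<longleftrightarrow> (\<forall>i. Suc i < length ls \<longrightarrow> \<not> lle (ls ! i) (ls ! Suc i))"

definition NDA :: "nat \<Rightarrow> 'l set \<Rightarrow> ('l \<Rightarrow> 'l \<Rightarrow> bool) \<Rightarrow> 'l list set" where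
  "NDA n L lle = {w. length w = n \<and> set w \<subseteq> L \<and>
     (\<forall>i. i + 2 < n \<longrightarrow> \<not> (lle (w ! i) (w ! (i + 1)) \<and> lle (w ! (i + 1)) (w ! (i + 2))))}"

definition asc :: "('l \<Rightarrow> 'l \<Rightarrow> bool) \<Rightarrow> 'l list \<Rightarrow> nat" where
  "asc lle w = card {i. Suc i < length w \<and> lle (w ! i) (w ! Suc i)}"

definition chain_count :: "'a set \<Rightarrow> ('a \<Rightarrow> 'a \<Rightarrow> bool) \<Rightarrow> ('a ext \<Rightarrow> 'a ext \<Rightarrow> 'l) \<Rightarrow> 'l list \<Rightarrow> nat" where
  "chain_count S le lamP w = card {c \<in> maxchains S le. labels (\<lambda>x y. lamP (El x) (El y)) c = w}"

end

theory Submission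
  imports Defs
begin


lemma cover_chain_Nil[simp]: "\<not> cover_chain S le []"
  by (simp add: cover_chain_def)

lemma cover_chain_single[simp]: "cover_chain S le [x] \<longleftrightarrow> x \<in> S"
  by (auto simp: cover_chain_def)

lemma covers_in: "covers S le x y \<Longrightarrow> x \<in> S \<and> y \<in> S"
  by (simp add: covers_def)

lemma cover_chain_Cons2[simp]:
  "cover_chain S le (x#y#c) \<longleftrightarrow> covers S le x y \<and> cover_chain S le (y#c)"
proof
  assume a: "cover_chain S le (x#y#c)"
  have "Suc 0 < length (x#y#c)" by simp
  then have "covers S le ((x#y#c)!0) ((x#y#c)!Suc 0)" using a unfolding cover_chain_def by blast
  then have "covers S le x y" by simp
  moreover have "cover_chain S le (y#c)" unfolding cover_chain_def
  proof (intro conjI allI impI)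
    show "set (y#c) \<subseteq> S" using a unfolding cover_chain_def by simp
    fix i assume "Suc i < length (y#c)"
    then have "Suc (Suc i) < length (x#y#c)" by simp
    then have "covers S le ((x#y#c)!Suc i) ((x#y#c)!Suc (Suc i))" using a unfolding cover_chain_def by blast
    then show "covers S le ((y#c)!i) ((y#c)!Suc i)" by simp
  qed simp
  ultimately show "covers S le x y \<and> cover_chain S le (y#c)" by simp
next
  assume a: "covers S le x y \<and> cover_chain S le (y#c)"
  show "cover_chain S le (x#y#c)" unfolding cover_chain_def
  proof (intro conjI allI impI)
    show "set (x#y#c) \<subseteq> S" using a covers_in unfolding cover_chain_def by fastforce
    fix i assume i: "Suc i < length (x#y#c)"
    show "covers S le ((x#y#c)!i) ((x#y#c)!Suc i)"
    proof (cases i)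
      case 0 then show ?thesis using a by simp
    next
      case (Suc j) then show ?thesis using a i unfolding cover_chain_def by auto
    qed
  qed simp
qed

lemma cover_chain_append:
  "cover_chain S le c1 \<Longrightarrow> cover_chain S le c2 \<Longrightarrow> last c1 = hd c2 \<Longrightarrow> cover_chain S le (c1 @ tl c2)"
proof (induction c1 rule: induct_list012)
  case 1 then show ?case by simp
next
  case (2 x) then show ?case by (cases c2) auto
next
  case (3 x y zs) then show ?case by auto
qed

lemma cover_chain_set: "cover_chain S le c \<Longrightarrow> set c \<subseteq> S"
  by (simp add: cover_chain_def)

lemma cover_chain_take: "cover_chain S le c \<Longrightarrow> i < length c \<Longrightarrow> cover_chain S le (take (Suc i) c)"
  unfolding cover_chain_def by (auto dest: in_set_takeD)

lemma covers_sub: "covers S le u v \<Longrightarrow> S' \<subseteq> S \<Longrightarrow> u \<in> S' \<Longrightarrow> v \<in> S' \<Longrightarrow> covers S' le u v"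
  unfolding covers_def by blast

locale SP =
  fixes P :: "'a set" and le :: "'a \<Rightarrow> 'a \<Rightarrow> bool" and bot top :: 'a
  assumes fin: "finite P" and po: "po_on P le" and semi: "semipure P le"
    and botP: "bot \<in> P" and botle: "\<forall>y\<in>P. le bot y"
    and topP: "top \<in> P" and letop: "\<forall>y\<in>P. le y top"
begin

lemma refl: "x \<in> P \<Longrightarrow> le x x" using po unfolding po_on_def by blast
lemma antisym: "x \<in> P \<Longrightarrow> y \<in> P \<Longrightarrow> le x y \<Longrightarrow> le y x \<Longrightarrow> x = y"
  using po unfolding po_on_def by blast
lemma trans: "x \<in> P \<Longrightarrow> y \<in> P \<Longrightarrow> z \<in> P \<Longrightarrow> le x y \<Longrightarrow> le y z \<Longrightarrow> le x z"
  using po unfolding po_on_def by blast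

lemma cc_le_last: "cover_chain P le c \<Longrightarrow> x \<in> set c \<Longrightarrow> le x (last c)"
proof (induction c arbitrary: x)
  case Nil then show ?case by simp
next
  case (Cons a c)
  show ?case
  proof (cases "c = []")
    case True then show ?thesis using Cons by (simp add: refl)
  next
    case False
    then obtain b zs where Cons2: "c = b#zs" by (cases c) auto
    have cab: "covers P le a b" and cc: "cover_chain P le c" using Cons.prems Cons2 by auto
    have lb: "le b (last c)" using Cons.IH[OF cc] Cons2 by simp
    have inP: "set (a#c) \<subseteq> P" using Cons.prems(1) cover_chain_set by blast
    have lP: "last c \<in> P" using inP Cons2 by auto
    show ?thesis
    proof (cases "x = a")
      case True
      have "le a (last c)"
        using trans[of a b "last c"] cab lb lP unfolding covers_def by auto
      then show ?thesis using True Cons2 by simp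
    next
      case False then show ?thesis using Cons.IH[OF cc] Cons.prems Cons2 by auto
    qed
  qed
qed

lemma ex_chain: "x \<in> P \<Longrightarrow> y \<in> P \<Longrightarrow> le x y \<Longrightarrow> \<exists>c. cover_chain P le c \<and> hd c = x \<and> last c = y"
proof (induction "card {w\<in>P. le x w \<and> le w y}" arbitrary: x y rule: less_induct)
  case less
  show ?case
  proof (cases "x = y")
    case True then show ?thesis using less by (intro exI[of _ "[x]"]) simp
  next
    case False
    show ?thesis
    proof (cases "covers P le x y")
      case True then show ?thesis by (intro exI[of _ "[x,y]"]) (simp add: covers_def)
    next
      case nc: False
      then obtain z where z: "z \<in> P" "le x z" "le z y" "z \<noteq> x" "z \<noteq> y"
        using less False unfolding covers_def by blast
      have f: "finite {w\<in>P. le x w \<and> le w y}" using fin by simp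
      have "{w\<in>P. le x w \<and> le w z} \<subset> {w\<in>P. le x w \<and> le w y}"
      proof
        show "{w\<in>P. le x w \<and> le w z} \<subseteq> {w\<in>P. le x w \<and> le w y}"
          using z less(2,3) trans by blast
        have "y \<notin> {w\<in>P. le x w \<and> le w z}" using z antisym less(3) by blast
        moreover have "y \<in> {w\<in>P. le x w \<and> le w y}" using less refl by blast
        ultimately show "{w\<in>P. le x w \<and> le w z} \<noteq> {w\<in>P. le x w \<and> le w y}" by blast
      qed
      then have "card {w\<in>P. le x w \<and> le w z} < card {w\<in>P. le x w \<and> le w y}"
        using f psubset_card_mono by blast
      then obtain c1 where c1: "cover_chain P le c1" "hd c1 = x" "last c1 = z"
        using less(1)[of x z] less(2) z by blast
      have "{w\<in>P. le z w \<and> le w y} \<subset> {w\<in>P. le x w \<and> le w y}"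
      proof
        show "{w\<in>P. le z w \<and> le w y} \<subseteq> {w\<in>P. le x w \<and> le w y}"
          using z less(2,3) trans by blast
        have "x \<notin> {w\<in>P. le z w \<and> le w y}" using z antisym less(2) by blast
        moreover have "x \<in> {w\<in>P. le x w \<and> le w y}" using less refl by blast
        ultimately show "{w\<in>P. le z w \<and> le w y} \<noteq> {w\<in>P. le x w \<and> le w y}" by blast
      qed
      then have "card {w\<in>P. le z w \<and> le w y} < card {w\<in>P. le x w \<and> le w y}"
        using f psubset_card_mono by blast
      then obtain c2 where c2: "cover_chain P le c2" "hd c2 = z" "last c2 = y"
        using less(1)[of z y] less(3) z by blast
      have ne1: "c1 \<noteq> []" "c2 \<noteq> []" using c1 c2 by auto
      have "last (c1 @ tl c2) = y"
      proof (cases "tl c2 = []")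
        case True then have "c2 = [z]" using c2 ne1 by (cases c2) auto
        then show ?thesis using True c1 c2 by simp
      next
        case False then show ?thesis using c2 ne1 by (simp add: last_tl)
      qed
      then show ?thesis using cover_chain_append[OF c1(1) c2(1)] c1 c2 ne1 by (intro exI[of _ "c1 @ tl c2"]) simp
    qed
  qed
qed

abbreviation r where "r \<equiv> prank P le"

lemma rank: assumes "cover_chain P le c" "hd c = bot" shows "r (last c) = length c - 1"
proof -
  let ?x = "last c"
  have ne: "c \<noteq> []" using assms by auto
  have xP: "?x \<in> P" using cover_chain_set[OF assms(1)] last_in_set[OF ne] by blast
  have sub: "set c \<subseteq> downset P le ?x"
    using assms cover_chain_set cc_le_last unfolding downset_def by blast
  have dsub: "downset P le ?x \<subseteq> P" unfolding downset_def by auto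
  have "cover_chain (downset P le ?x) le c"
    unfolding cover_chain_def using ne sub assms(1) covers_sub[OF _ dsub] unfolding cover_chain_def
    by (metis Suc_lessD nth_mem subset_code(1))
  moreover have "pminimal (downset P le ?x) le (hd c)"
    using assms botP botle antisym xP unfolding pminimal_def downset_def by auto
  moreover have "pmaximal (downset P le ?x) le (last c)"
    using xP refl antisym unfolding pmaximal_def downset_def by auto
  ultimately have cm: "c \<in> maxchains (downset P le ?x) le" unfolding maxchains_def by simp
  then have sm: "(SOME c. c \<in> maxchains (downset P le ?x) le) \<in> maxchains (downset P le ?x) le"
    by (rule someI)
  have "length (SOME c. c \<in> maxchains (downset P le ?x) le) = length c"
    using semi xP sm cm unfolding semipure_def by blast
  then show ?thesis unfolding prank_def by simp
qed

lemma rank_chain: assumes "x \<in> P" shows "\<exists>c. cover_chain P le c \<and> hd c = bot \<and> last c = x \<and> r x = length c - 1"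
  using ex_chain[OF botP assms] botle assms rank by blast

lemma rank_cover: assumes "covers P le x y" shows "r y = Suc (r x)"
proof -
  have xy: "x \<in> P" "y \<in> P" using covers_in[OF assms] by auto
  obtain c where c: "cover_chain P le c" "hd c = bot" "last c = x" "r x = length c - 1"
    using rank_chain xy by blast
  have cc2: "cover_chain P le [x,y]" using assms xy by simp
  have "cover_chain P le (c @ [y])" using cover_chain_append[OF c(1) cc2] c by simp
  moreover have "c \<noteq> []" using c by auto
  ultimately have "r (last (c@[y])) = length (c@[y]) - 1" using rank[of "c@[y]"] c by simp
  then show ?thesis using c \<open>c \<noteq> []\<close> by simp
qed

lemma rank_less: assumes "x \<in> P" "y \<in> P" "le x y" "x \<noteq> y" shows "r x < r y"
proof -
  obtain c where c: "cover_chain P le c" "hd c = bot" "last c = x" "r x = length c - 1"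
    using rank_chain assms by blast
  obtain c2 where c2: "cover_chain P le c2" "hd c2 = x" "last c2 = y"
    using ex_chain assms by blast
  have ne: "c \<noteq> []" "c2 \<noteq> []" using c c2 by auto
  have l2: "length c2 \<ge> 2"
  proof (rule ccontr)
    assume "\<not> length c2 \<ge> 2"
    moreover have "length c2 \<noteq> 0" using ne by simp
    ultimately have "length c2 = 1" by arith
    then obtain a where "c2 = [a]" by (metis One_nat_def length_0_conv length_Suc_conv)
    then show False using c2 assms by simp
  qed
  have "tl c2 \<noteq> []" using l2 by (cases c2) auto
  then have lt: "last (c @ tl c2) = y" using c2 ne by (simp add: last_tl)
  have "cover_chain P le (c @ tl c2)" using cover_chain_append[OF c(1) c2(1)] c c2 by simp
  then have ry: "r y = length (c @ tl c2) - 1" using rank[of "c @ tl c2"] lt c ne by simp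
  have "length (c @ tl c2) = length c + length c2 - 1" using ne by (cases c2) auto
  moreover have "length c \<ge> 1" using ne by (cases c) auto
  ultimately show ?thesis using c(4) l2 ry by linarith
qed

lemma rank_le: "x \<in> P \<Longrightarrow> y \<in> P \<Longrightarrow> le x y \<Longrightarrow> r x \<le> r y"
  using rank_less by fastforce

lemma rank_bot: "r bot = 0" using rank[of "[bot]"] botP by simp

lemma maxchains_iff: "d \<in> maxchains P le \<longleftrightarrow> cover_chain P le d \<and> hd d = bot \<and> last d = top"
proof
  assume "d \<in> maxchains P le"
  then show "cover_chain P le d \<and> hd d = bot \<and> last d = top"
    unfolding maxchains_def pminimal_def pmaximal_def using botP botle topP letop by auto
next
  assume a: "cover_chain P le d \<and> hd d = bot \<and> last d = top"
  then show "d \<in> maxchains P le"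
    unfolding maxchains_def pminimal_def pmaximal_def using botP botle topP letop antisym by auto
qed

lemma maxchain_len: "d \<in> maxchains P le \<Longrightarrow> length d = Suc (r top)"
  using rank[of d] maxchains_iff by (cases d) auto

lemma maxchain_rank: assumes "d \<in> maxchains P le" "i < length d" shows "r (d!i) = i"
proof -
  have "cover_chain P le (take (Suc i) d)" using assms cover_chain_take maxchains_iff by blast
  moreover have "hd (take (Suc i) d) = bot" using assms maxchains_iff by (cases d) auto
  ultimately have "r (last (take (Suc i) d)) = length (take (Suc i) d) - 1" by (rule rank)
  moreover have "last (take (Suc i) d) = d!i"
  proof -
    have "take (Suc i) d \<noteq> []" "length (take (Suc i) d) = Suc i" using assms by auto
    then show ?thesis by (simp add: last_conv_nth)
  qed
  ultimately show ?thesis using assms by simp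
qed

lemma chain_len_bound: assumes "is_chain P le c" "c \<noteq> []" shows "length c - 1 \<le> r top"
proof -
  have inP: "set c \<subseteq> P" using assms unfolding is_chain_def by auto
  have "\<forall>i<length c. i \<le> r (c!i)"
  proof (intro allI impI)
    fix i assume "i < length c"
    then show "i \<le> r (c!i)"
    proof (induction i)
      case 0 then show ?case by simp
    next
      case (Suc i)
      have "le (c!i) (c!Suc i)" "c!i \<noteq> c!Suc i" using assms Suc unfolding is_chain_def by auto
      moreover have "c!i \<in> P" "c!Suc i \<in> P" using inP Suc.prems nth_mem Suc_lessD by blast+
      ultimately have "r (c!i) < r (c!Suc i)" using rank_less by blast
      then show ?case using Suc by simp
    qed
  qed
  then have "length c - 1 \<le> r (c!(length c - 1))" using assms by simp
  moreover have "r (c!(length c - 1)) \<le> r top" using rank_le inP topP letop assms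
    by (metis diff_less length_greater_0_conv less_one nth_mem subsetD)
  ultimately show ?thesis by simp
qed

lemma poset_length_eq: "poset_length P le = r top"
proof -
  let ?S = "{length c - 1 | c. c \<noteq> [] \<and> is_chain P le c}"
  have sub: "?S \<subseteq> {..r top}" using chain_len_bound by auto
  obtain c where c: "cover_chain P le c" "hd c = bot" "last c = top"
    using ex_chain botP topP botle by blast
  have "is_chain P le c" using c unfolding cover_chain_def is_chain_def covers_def by auto
  moreover have "r top = length c - 1" using rank c by force
  ultimately have "r top \<in> ?S" using c by auto
  have fS: "finite ?S" using sub finite_subset by blast
  have "\<And>y. y \<in> ?S \<Longrightarrow> y \<le> r top" using sub by auto
  then show ?thesis unfolding poset_length_def
    using Max_eqI[OF fS] \<open>r top \<in> ?S\<close> by blast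
qed

end


lemma prefix_le_eq: "prefix a b \<Longrightarrow> length b \<le> length a \<Longrightarrow> a = b"
  by (auto simp: prefix_def)

lemma ext_le_Top_iff[simp]: "ext_le R Top v \<longleftrightarrow> v = Top"
  by (cases v) auto

lemma ext_le_El_Bot[simp]: "\<not> ext_le R (El x) Bot"
  by simp

locale RS = SP P le bot top for P :: "'a set" and le bot top +
  fixes t n :: nat
  assumes rtop: "prank P le top = n"
begin

abbreviation "Q \<equiv> rees_set P r (tset t n) length"
abbreviation "R \<equiv> rees_le le r prefix length"
abbreviation "X \<equiv> plus_set Q"
abbreviation "E \<equiv> ext_le R"

lemma memQ: "(x,k) \<in> Q \<longleftrightarrow> x \<in> P \<and> set k \<subseteq> {1..t} \<and> length k \<le> n \<and> length k \<le> r x"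
  by (auto simp: rees_set_def tset_def)

lemma R_iff: "R (x,k) (y,l) \<longleftrightarrow> le x y \<and> prefix k l \<and> int (length l) - int (length k) \<le> int (r y) - int (r x)"
  by (simp add: rees_le_def)

lemma memX: "v \<in> X \<longleftrightarrow> v = Top \<or> (\<exists>p\<in>Q. v = El p)"
  by (auto simp: plus_set_def)

lemma no_cov_Top: "\<not> covers X E Top v"
  unfolding covers_def by auto

lemma cov_El:
  assumes xk: "(x,k) \<in> Q" and yl: "(y,l) \<in> Q"
  shows "covers X E (El (x,k)) (El (y,l)) \<longleftrightarrow> covers P le x y \<and> (l = k \<or> (\<exists>a\<in>{1..t}. l = k @ [a]))"
proof
  assume cv: "covers X E (El (x,k)) (El (y,l))"
  have Rxy: "R (x,k) (y,l)" and ne: "(x,k) \<noteq> (y,l)"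
    and nb: "\<And>v. v \<in> X \<Longrightarrow> E (El (x,k)) v \<Longrightarrow> E v (El (y,l)) \<Longrightarrow> v = El (x,k) \<or> v = El (y,l)"
    using cv unfolding covers_def by auto
  have lexy: "le x y" and pf: "prefix k l" and rd: "int (length l) - int (length k) \<le> int (r y) - int (r x)"
    using Rxy R_iff by auto
  have xP: "x \<in> P" and yP: "y \<in> P" and kx: "length k \<le> r x" and ly: "set l \<subseteq> {1..t}" "length l \<le> n"
    using xk yl memQ by auto
  have lk: "length k \<le> length l" using pf prefix_length_le by blast
  have xy: "x \<noteq> y"
  proof
    assume "x = y"
    then have "length l \<le> length k" using rd by simp
    then show False using prefix_le_eq[OF pf] ne \<open>x = y\<close> by simp
  qed
  have cxy: "covers P le x y"
    unfolding covers_def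
  proof (intro conjI xP yP lexy xy notI)
    assume "\<exists>z\<in>P. le x z \<and> le z y \<and> z \<noteq> x \<and> z \<noteq> y"
    then obtain z where z: "z \<in> P" "le x z" "le z y" "z \<noteq> x" "z \<noteq> y" by blast
    have rxz: "r x < r z" using rank_less xP z by metis
    have rzy: "r z < r y" using rank_less yP z by metis
    define e where "e = length l - length k"
    define m where "m = min e (r z - r x)"
    define k' where "k' = take (length k + m) l"
    have lk': "length k' = length k + m" unfolding k'_def m_def e_def using lk by auto
    have "length k' \<le> length l" unfolding k'_def by simp
    moreover have "m \<le> r z - r x" unfolding m_def by simp
    moreover have "set k' \<subseteq> {1..t}" using ly set_take_subset[of "length k + m" l] unfolding k'_def by blast
    ultimately have "(z,k') \<in> Q" unfolding memQ
      using z ly lk' kx rxz by auto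
    moreover have "R (x,k) (z,k')"
    proof -
      have "k = take (length k) l" using pf by (metis append_eq_conv_conj prefixE)
      then have "prefix k k'" unfolding k'_def by (metis take_add prefixI)
      moreover have "int (length k') - int (length k) \<le> int (r z) - int (r x)"
        using lk' rxz unfolding m_def by auto
      ultimately show ?thesis using R_iff z by auto
    qed
    moreover have "R (z,k') (y,l)"
    proof -
      have "prefix k' l" unfolding k'_def by (rule take_is_prefix)
      moreover have "int (length l) - int (length k') \<le> int (r y) - int (r z)"
        using lk' rd rzy rxz lk unfolding m_def e_def by (auto simp: min_def)
      ultimately show ?thesis using R_iff z by auto
    qed
    ultimately have "El (z,k') = El (x,k) \<or> El (z,k') = El (y,l)"
      using nb[of "El (z,k')"] memX by auto
    then show False using z by auto
  qed
  have "r y = Suc (r x)" using rank_cover[OF cxy] .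
  then have "length l \<le> Suc (length k)" using rd by linarith
  moreover obtain zs where zs: "l = k @ zs" using pf prefixE by blast
  ultimately have "length zs \<le> 1" by simp
  then have "zs = [] \<or> (\<exists>a. zs = [a])" by (cases zs) auto
  then have "l = k \<or> (\<exists>a\<in>{1..t}. l = k @ [a])" using zs ly by auto
  then show "covers P le x y \<and> (l = k \<or> (\<exists>a\<in>{1..t}. l = k @ [a]))" using cxy by simp
next
  assume a: "covers P le x y \<and> (l = k \<or> (\<exists>a\<in>{1..t}. l = k @ [a]))"
  then have cxy: "covers P le x y" and st: "l = k \<or> (\<exists>a\<in>{1..t}. l = k @ [a])" by auto
  have rr: "r y = Suc (r x)" using rank_cover[OF cxy] .
  have pf: "prefix k l" using st by auto
  have ll: "length l \<le> Suc (length k)" using st by auto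
  have Rxy: "R (x,k) (y,l)" unfolding R_iff using cxy pf ll rr unfolding covers_def by auto
  have xy: "x \<noteq> y" using cxy unfolding covers_def by auto
  have nb: "\<not> (\<exists>v\<in>X. E (El (x,k)) v \<and> E v (El (y,l)) \<and> v \<noteq> El (x,k) \<and> v \<noteq> El (y,l))"
  proof
    assume "\<exists>v\<in>X. E (El (x,k)) v \<and> E v (El (y,l)) \<and> v \<noteq> El (x,k) \<and> v \<noteq> El (y,l)"
    then obtain v where v: "v \<in> X" "E (El (x,k)) v" "E v (El (y,l))" "v \<noteq> El (x,k)" "v \<noteq> El (y,l)" by blast
    then obtain z m where vz: "v = El (z,m)" "(z,m) \<in> Q" using memX by auto
    have R1: "R (x,k) (z,m)" and R2: "R (z,m) (y,l)" using v vz by auto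
    have zP: "z \<in> P" using vz memQ by auto
    have "le x z" "le z y" using R1 R2 unfolding R_iff by auto
    then have "z = x \<or> z = y" using cxy zP unfolding covers_def by blast
    then show False
    proof
      assume "z = x"
      then have "prefix k m" "length m \<le> length k" using R1 unfolding R_iff by auto
      then show False using prefix_le_eq v vz \<open>z = x\<close> by auto
    next
      assume "z = y"
      then have "prefix m l" "length l \<le> length m" using R2 unfolding R_iff by auto
      then show False using prefix_le_eq v vz \<open>z = y\<close> by auto
    qed
  qed
  have "El (x,k) \<in> X" "El (y,l) \<in> X" using xk yl memX by auto
  then show "covers X E (El (x,k)) (El (y,l))"
    unfolding covers_def using Rxy xy nb by simp
qed

lemma cov_Top:
  assumes xk: "(x,k) \<in> Q"
  shows "covers X E (El (x,k)) Top \<longleftrightarrow> x = top"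
proof
  assume cv: "covers X E (El (x,k)) Top"
  show "x = top"
  proof (rule ccontr)
    assume nt: "x \<noteq> top"
    have xP: "x \<in> P" and kx: "length k \<le> r x" using xk memQ by auto
    have rx: "r x \<le> r top" using rank_le xP topP letop by blast
    have "(top,k) \<in> Q" using xk memQ topP rx by auto
    moreover have "R (x,k) (top,k)" unfolding R_iff using letop xP rx by auto
    ultimately have m: "El (top,k) \<in> X" and Rt: "R (x,k) (top,k)" using memX by auto
    from cv have "\<not> (\<exists>v\<in>X. E (El (x,k)) v \<and> E v Top \<and> v \<noteq> El (x,k) \<and> v \<noteq> Top)"
      unfolding covers_def by blast
    then show False using m Rt nt by auto
  qed
next
  assume xt: "x = top"
  have nb: "\<not> (\<exists>v\<in>X. E (El (x,k)) v \<and> E v Top \<and> v \<noteq> El (x,k) \<and> v \<noteq> Top)"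
  proof
    assume "\<exists>v\<in>X. E (El (x,k)) v \<and> E v Top \<and> v \<noteq> El (x,k) \<and> v \<noteq> Top"
    then obtain u where u: "u \<in> X" "E (El (x,k)) u" "u \<noteq> El (x,k)" "u \<noteq> Top" by blast
    then obtain z m where uz: "u = El (z,m)" "(z,m) \<in> Q" using memX by auto
    then have v: "(z,m) \<in> Q" "R (x,k) (z,m)" "El (z,m) \<noteq> El (x,k)" using u by auto
    have zP: "z \<in> P" using v memQ by auto
    have "le top z" using v(2) unfolding R_iff xt by auto
    then have "z = top" using antisym zP topP letop by blast
    then have "prefix k m" "length m \<le> length k" using v(2) unfolding R_iff xt by auto
    then show False using prefix_le_eq v \<open>z = top\<close> xt by auto
  qed
  have "El (x,k) \<in> X" "Top \<in> X" using xk memX by auto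
  then show "covers X E (El (x,k)) Top"
    unfolding covers_def using nb by simp
qed

end


definition ks :: "nat list \<Rightarrow> nat \<Rightarrow> nat list" where
  "ks z i = filter (\<lambda>a. a \<noteq> 0) (take i z)"

definition dec :: "nat list \<Rightarrow> nat list \<Rightarrow> nat" where
  "dec k k' = (if k' = k then 0 else last k')"

definition unEl :: "'b ext \<Rightarrow> 'b" where
  "unEl v = (case v of El x \<Rightarrow> x | _ \<Rightarrow> undefined)"

lemma unEl_El[simp]: "unEl (El x) = x" by (simp add: unEl_def)

lemma ks_0[simp]: "ks z 0 = []" by (simp add: ks_def)

lemma ks_Suc: "i < length z \<Longrightarrow> ks z (Suc i) = ks z i @ (if z!i = 0 then [] else [z!i])"
  by (simp add: ks_def take_Suc_conv_app_nth)

lemma ks_len: "length (ks z i) \<le> i"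
  unfolding ks_def by (rule order_trans[OF length_filter_le]) simp

lemma ks_set: "set z \<subseteq> {0..t} \<Longrightarrow> set (ks z i) \<subseteq> {1..t}"
  unfolding ks_def using set_take_subset[of i z] by auto

lemma dec_ks: "i < length z \<Longrightarrow> dec (ks z i) (ks z (Suc i)) = z!i"
  by (simp add: ks_Suc dec_def)

lemma dec_same[simp]: "dec k k = 0" by (simp add: dec_def)
lemma dec_app[simp]: "dec k (k @ [a]) = a" by (simp add: dec_def)

context RS
begin

abbreviation "M \<equiv> maxchains P le"

definition Psi :: "'a list \<Rightarrow> nat list \<Rightarrow> ('a \<times> nat list) ext list" where
  "Psi d z = map (\<lambda>i. El (d!i, ks z i)) [0..<Suc n] @ [Top]"

lemma Psi_len[simp]: "length (Psi d z) = Suc (Suc n)"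
  by (simp add: Psi_def)

lemma Psi_nth: "i \<le> n \<Longrightarrow> Psi d z ! i = El (d!i, ks z i)"
  by (simp add: Psi_def nth_append del: upt_Suc)

lemma Psi_last: "Psi d z ! Suc n = Top"
  by (simp add: Psi_def nth_append del: upt_Suc)

lemma M_len: "d \<in> M \<Longrightarrow> length d = Suc n"
  using maxchain_len rtop by simp

lemma M_rank: "d \<in> M \<Longrightarrow> i \<le> n \<Longrightarrow> r (d!i) = i"
  using maxchain_rank M_len by simp

lemma M_cov: assumes "d \<in> M" "i < n" shows "covers P le (d!i) (d!Suc i)"
proof -
  have "cover_chain P le d" using assms maxchains_iff by blast
  moreover have "Suc i < length d" using M_len[OF assms(1)] assms(2) by simp
  ultimately show ?thesis unfolding cover_chain_def by blast
qed

lemma M_in: "d \<in> M \<Longrightarrow> i \<le> n \<Longrightarrow> d!i \<in> P"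
  using M_len maxchains_iff cover_chain_set
  by (metis le_imp_less_Suc nth_mem subsetD)

lemma M_hd: "d \<in> M \<Longrightarrow> d!0 = bot"
  using M_len maxchains_iff by (metis hd_conv_nth list.size(3) nat.distinct(1))

lemma M_last: "d \<in> M \<Longrightarrow> d!n = top"
  using M_len maxchains_iff by (metis diff_Suc_1 last_conv_nth list.size(3) nat.distinct(1))

lemma Psi_Q: "d \<in> M \<Longrightarrow> set z \<subseteq> {0..t} \<Longrightarrow> i \<le> n \<Longrightarrow> (d!i, ks z i) \<in> Q"
  unfolding memQ using M_in M_rank ks_set ks_len by (metis order.trans)

lemma Psi_mem:
  assumes d: "d \<in> M" and lz: "length z = n" and sz: "set z \<subseteq> {0..t}"
  shows "Psi d z \<in> mchains X E (El (bot,[])) Top"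
proof -
  have "set (Psi d z) \<subseteq> X"
  proof
    fix v assume "v \<in> set (Psi d z)"
    then obtain i where i: "i < Suc (Suc n)" "v = Psi d z ! i" by (auto simp: in_set_conv_nth)
    show "v \<in> X"
    proof (cases "i \<le> n")
      case True then show ?thesis using i Psi_nth Psi_Q[OF d sz] memX by auto
    next
      case False then have "i = Suc n" using i by simp
      then show ?thesis using i Psi_last memX by auto
    qed
  qed
  moreover have "\<forall>i. Suc i < length (Psi d z) \<longrightarrow> covers X E (Psi d z ! i) (Psi d z ! Suc i)"
  proof (intro allI impI)
    fix i assume "Suc i < length (Psi d z)"
    then have i: "i \<le> n" by simp
    show "covers X E (Psi d z ! i) (Psi d z ! Suc i)"
    proof (cases "i < n")
      case True
      have zi: "z!i \<in> {0..t}" using subsetD[OF sz nth_mem[of i z]] True lz by simp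
      have st: "ks z (Suc i) = ks z i \<or> (\<exists>a\<in>{1..t}. ks z (Suc i) = ks z i @ [a])"
        using ks_Suc[of i z] True lz zi by (cases "z!i = 0") auto
      have "covers X E (El (d!i, ks z i)) (El (d!Suc i, ks z (Suc i)))"
        using cov_El[OF Psi_Q[OF d sz i] Psi_Q[OF d sz, of "Suc i"]] True M_cov[OF d True] st by simp
      then show ?thesis using True Psi_nth i by simp
    next
      case False then have "i = n" using i by simp
      then show ?thesis using cov_Top[OF Psi_Q[OF d sz i]] M_last[OF d] Psi_nth Psi_last by simp
    qed
  qed
  moreover have "hd (Psi d z) = El (bot,[])"
  proof -
    have "Psi d z \<noteq> []" using Psi_len[of d z] by (metis list.size(3) nat.distinct(1))
    then show ?thesis using Psi_nth[of 0 d z] M_hd[OF d] by (simp add: hd_conv_nth)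
  qed
  moreover have "last (Psi d z) = Top" by (simp add: Psi_def)
  moreover have "Psi d z \<noteq> []" using Psi_len[of d z] by (metis list.size(3) nat.distinct(1))
  ultimately show ?thesis unfolding mchains_def cover_chain_def by blast
qed

lemma Psi_inj:
  assumes "d \<in> M" "d' \<in> M" "length z = n" "length z' = n" "Psi d z = Psi d' z'"
  shows "d = d' \<and> z = z'"
proof
  have eq: "\<And>i. i \<le> n \<Longrightarrow> d!i = d'!i \<and> ks z i = ks z' i"
    using assms(5) Psi_nth by (metis ext.inject prod.inject)
  show "d = d'" using eq M_len assms(1,2) by (intro nth_equalityI) auto
  show "z = z'"
  proof (rule nth_equalityI)
    show "length z = length z'" using assms by simp
    fix i assume "i < length z"
    then show "z!i = z'!i" using dec_ks[of i z] dec_ks[of i z'] eq[of i] eq[of "Suc i"] assms(3,4) by simp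
  qed
qed

lemma Psi_surj:
  assumes c: "c \<in> mchains X E (El (bot,[])) Top"
  shows "\<exists>d z. d \<in> M \<and> length z = n \<and> set z \<subseteq> {0..t} \<and> c = Psi d z"
proof -
  have cc: "cover_chain X E c" and hc: "hd c = El (bot,[])" and lc: "last c = Top"
    using c unfolding mchains_def by auto
  have ne: "c \<noteq> []" using cc by auto
  define m where "m = length c - 1"
  have lenc: "length c = Suc m" using ne unfolding m_def by simp
  have cov: "\<And>i. i < m \<Longrightarrow> covers X E (c!i) (c!Suc i)"
    using cc lenc unfolding cover_chain_def by simp
  have inX: "\<And>i. i \<le> m \<Longrightarrow> c!i \<in> X"
    using cc lenc unfolding cover_chain_def by (metis le_imp_less_Suc nth_mem subsetD)
  have cm: "c!m = Top" using lc ne lenc by (simp add: last_conv_nth)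
  have c0: "c!0 = El (bot,[])" using hc ne by (simp add: hd_conv_nth)
  have m1: "m \<ge> 1"
  proof (rule ccontr)
    assume "\<not> m \<ge> 1" then have "m = 0" by simp
    then show False using cm c0 by simp
  qed
  define e where "e i = unEl (c!i)" for i
  have isEl: "\<And>i. i < m \<Longrightarrow> c!i = El (e i) \<and> e i \<in> Q"
  proof -
    fix i assume i: "i < m"
    have "c!i \<noteq> Top" using cov[OF i] no_cov_Top by metis
    then obtain p where "p \<in> Q" "c!i = El p" using inX[of i] i memX by auto
    then show "c!i = El (e i) \<and> e i \<in> Q" unfolding e_def by simp
  qed
  have e0: "e 0 = (bot,[])" using isEl[of 0] m1 c0 by simp
  have step: "\<And>i. Suc i < m \<Longrightarrow> covers P le (fst (e i)) (fst (e (Suc i))) \<and>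
      (snd (e (Suc i)) = snd (e i) \<or> (\<exists>a\<in>{1..t}. snd (e (Suc i)) = snd (e i) @ [a]))"
  proof -
    fix i assume i: "Suc i < m"
    obtain x k where xk: "e i = (x,k)" by fastforce
    obtain y l where yl: "e (Suc i) = (y,l)" by fastforce
    have "covers X E (El (x,k)) (El (y,l))" using cov[of i] isEl[of i] isEl[of "Suc i"] i xk yl by simp
    then show "covers P le (fst (e i)) (fst (e (Suc i))) \<and>
      (snd (e (Suc i)) = snd (e i) \<or> (\<exists>a\<in>{1..t}. snd (e (Suc i)) = snd (e i) @ [a]))"
      using cov_El isEl[of i] isEl[of "Suc i"] i xk yl by simp
  qed
  have lastt: "fst (e (m-1)) = top"
  proof -
    obtain x k where xk: "e (m-1) = (x,k)" by fastforce
    have "covers X E (El (x,k)) Top" using cov[of "m-1"] isEl[of "m-1"] m1 xk cm by simp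
    then show ?thesis using cov_Top isEl[of "m-1"] m1 xk by simp
  qed
  define d where "d = map (\<lambda>i. fst (e i)) [0..<m]"
  have lend: "length d = m" unfolding d_def by simp
  have dnth: "\<And>i. i < m \<Longrightarrow> d!i = fst (e i)" unfolding d_def by simp
  have dM: "d \<in> M"
    unfolding maxchains_iff
  proof (intro conjI)
    have "set d \<subseteq> P"
    proof
      fix x assume "x \<in> set d"
      then obtain i where "i < m" "x = d!i" using lend by (auto simp: in_set_conv_nth)
      then show "x \<in> P" using isEl dnth memQ by (metis prod.collapse)
    qed
    moreover have "d \<noteq> []" using lend m1 by auto
    ultimately show "cover_chain P le d" unfolding cover_chain_def using step lend dnth
      by (simp add: Suc_lessD)
    show "hd d = bot" using m1 dnth[of 0] e0 lend
      by (simp add: hd_conv_nth \<open>d \<noteq> []\<close>)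
    show "last d = top" using m1 dnth[of "m-1"] lastt lend \<open>d \<noteq> []\<close>
      by (simp add: last_conv_nth)
  qed
  have mn: "m = Suc n" using M_len[OF dM] lend by simp
  define z where "z = map (\<lambda>i. dec (snd (e i)) (snd (e (Suc i)))) [0..<n]"
  have lz: "length z = n" unfolding z_def by simp
  have znth: "\<And>i. i < n \<Longrightarrow> z!i = dec (snd (e i)) (snd (e (Suc i)))" unfolding z_def by simp
  have zset: "set z \<subseteq> {0..t}"
  proof
    fix a assume "a \<in> set z"
    then obtain i where i: "i < n" "a = z!i" using lz by (auto simp: in_set_conv_nth)
    have "Suc i < m" using i mn by simp
    then show "a \<in> {0..t}" using step[of i] i znth by auto
  qed
  have ksz: "\<And>i. i \<le> n \<Longrightarrow> ks z i = snd (e i)"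
  proof -
    fix i assume "i \<le> n"
    then show "ks z i = snd (e i)"
    proof (induction i)
      case 0 then show ?case using e0 by simp
    next
      case (Suc i)
      have i: "i < n" "Suc i < m" using Suc mn by auto
      have "ks z (Suc i) = snd (e i) @ (if z!i = 0 then [] else [z!i])"
        using ks_Suc[of i z] lz i Suc by simp
      then show ?case using step[OF i(2)] znth[OF i(1)] by auto
    qed
  qed
  have "c = Psi d z"
  proof (rule nth_equalityI)
    show "length c = length (Psi d z)" using lenc mn by simp
    fix j assume "j < length c"
    then have j: "j \<le> Suc n" using lenc mn by simp
    show "c!j = Psi d z ! j"
    proof (cases "j \<le> n")
      case True
      then have "j < m" using mn by simp
      then show ?thesis using isEl[of j] dnth[of j] ksz[OF True] Psi_nth[OF True] by simp
    next
      case False then have "j = Suc n" using j by simp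
      then show ?thesis using cm mn Psi_last by simp
    qed
  qed
  then show ?thesis using dM lz zset by blast
qed

end


section \<open>Counting binary patterns\<close>

fun okz :: "bool list \<Rightarrow> nat list \<Rightarrow> bool" where
  "okz [] [x] = (x \<noteq> 0)"
| "okz (a#A) (x#y#z) = ((a \<longrightarrow> x \<noteq> 0 \<and> y = 0) \<and> okz A (y#z))"
| "okz _ _ = False"

lemma okz_iff: "okz A z \<longleftrightarrow> length z = Suc (length A) \<and> (\<forall>i<length A. A!i \<longrightarrow> z!i \<noteq> 0 \<and> z!Suc i = 0) \<and> last z \<noteq> 0"
proof (induction A z rule: okz.induct)
  case (2 a A x y z)
  have "(\<forall>i<length (a#A). (a#A)!i \<longrightarrow> (x#y#z)!i \<noteq> 0 \<and> (x#y#z)!Suc i = 0) \<longleftrightarrow>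
        (a \<longrightarrow> x \<noteq> 0 \<and> y = 0) \<and> (\<forall>i<length A. A!i \<longrightarrow> (y#z)!i \<noteq> 0 \<and> (y#z)!Suc i = 0)"
    (is "?L \<longleftrightarrow> ?R")
  proof
    assume L: ?L
    have "a \<longrightarrow> x \<noteq> 0 \<and> y = 0" using L[rule_format, of 0] by simp
    moreover have "\<forall>i<length A. A!i \<longrightarrow> (y#z)!i \<noteq> 0 \<and> (y#z)!Suc i = 0"
      using L by (metis Suc_less_eq length_Cons nth_Cons_Suc)
    ultimately show ?R by simp
  next
    assume R: ?R
    show ?L
    proof (intro allI impI)
      fix i assume "i < length (a#A)" "(a#A)!i"
      then show "(x#y#z)!i \<noteq> 0 \<and> (x#y#z)!Suc i = 0" using R by (cases i) auto
    qed
  qed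
  note eqv = this
  have f1: "length (x#y#z) = Suc (length (a#A)) \<longleftrightarrow> length (y#z) = Suc (length A)" by simp
  have f3: "last (x#y#z) = last (y#z)" by simp
  have "okz (a#A) (x#y#z) \<longleftrightarrow> (a \<longrightarrow> x \<noteq> 0 \<and> y = 0) \<and> okz A (y#z)" by simp
  also have "\<dots> \<longleftrightarrow> (a \<longrightarrow> x \<noteq> 0 \<and> y = 0) \<and> (length (y#z) = Suc (length A) \<and> (\<forall>i<length A. A!i \<longrightarrow> (y#z)!i \<noteq> 0 \<and> (y#z)!Suc i = 0) \<and> last (y#z) \<noteq> 0)"
    by (simp only: 2)
  also have "\<dots> \<longleftrightarrow> length (x#y#z) = Suc (length (a#A)) \<and> (\<forall>i<length (a#A). (a#A)!i \<longrightarrow> (x#y#z)!i \<noteq> 0 \<and> (x#y#z)!Suc i = 0) \<and> last (x#y#z) \<noteq> 0"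
    unfolding f1 f3 eqv by (simp only: conj_ac)
  finally show ?case .
qed auto

fun G :: "nat \<Rightarrow> bool list \<Rightarrow> nat" where
  "G t [] = t"
| "G t (False#A) = (t+1) * G t A"
| "G t (True#False#A) = t * G t A"
| "G t [True] = 0"
| "G t (True#True#A) = 0"

lemma okz_False: "okz (False#A) (x#z) = okz A z"
  by (cases z) auto

lemma okz_Nil_right[simp]: "\<not> okz A []"
  by (cases A) auto

lemma card_okz: "card {z. set z \<subseteq> {0..t} \<and> okz A z} = G t A"
proof (induction t A rule: G.induct)
  case (1 t)
  have "{z. set z \<subseteq> {0..t} \<and> okz [] z} = (\<lambda>x. [x]) ` {1..t}"
  proof (intro set_eqI iffI)
    fix z assume "z \<in> {z. set z \<subseteq> {0..t} \<and> okz [] z}"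
    then show "z \<in> (\<lambda>x. [x]) ` {1..t}" using okz_iff[of "[]" z]
      by (cases z) auto
  qed auto
  then show ?case by (simp add: card_image inj_on_def)
next
  case (2 t A)
  have "{z. set z \<subseteq> {0..t} \<and> okz (False#A) z} = (\<lambda>(x,z). x#z) ` ({0..t} \<times> {z. set z \<subseteq> {0..t} \<and> okz A z})"
  proof (intro set_eqI iffI)
    fix w assume "w \<in> {z. set z \<subseteq> {0..t} \<and> okz (False#A) z}"
    then show "w \<in> (\<lambda>(x,z). x#z) ` ({0..t} \<times> {z. set z \<subseteq> {0..t} \<and> okz A z})"
      by (cases w) (auto simp: okz_False)
  qed (auto simp: okz_False)
  moreover have "inj (\<lambda>(x::nat,z::nat list). x#z)" by (auto simp: inj_def)
  ultimately show ?case using 2 by (simp add: card_image inj_on_subset card_cartesian_product)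
next
  case (3 t A)
  have "{z. set z \<subseteq> {0..t} \<and> okz (True#False#A) z} = (\<lambda>(x,z). x#0#z) ` ({1..t} \<times> {z. set z \<subseteq> {0..t} \<and> okz A z})"
  proof (intro set_eqI iffI)
    fix w assume a: "w \<in> {z. set z \<subseteq> {0..t} \<and> okz (True#False#A) z}"
    then obtain x y z where w: "w = x#y#z" by (cases w; cases "tl w") auto
    show "w \<in> (\<lambda>(x,z). x#0#z) ` ({1..t} \<times> {z. set z \<subseteq> {0..t} \<and> okz A z})"
      using a w by (auto simp: okz_False)
  qed (auto simp: okz_False)
  moreover have "inj (\<lambda>(x::nat,z::nat list). x#0#z)" by (auto simp: inj_def)
  ultimately show ?case using 3 by (simp add: card_image inj_on_subset card_cartesian_product)
next
  case (4 t)
  have "{z. set z \<subseteq> {0..t} \<and> okz [True] z} = {}"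
  proof (intro set_eqI iffI)
    fix w assume a: "w \<in> {z. set z \<subseteq> {0..t} \<and> okz [True] z}"
    then show "w \<in> {}" by (cases w; cases "tl w"; cases "tl (tl w)") auto
  qed auto
  then show ?case by (metis G.simps(4) card.empty)
next
  case (5 t A)
  have "{z. set z \<subseteq> {0..t} \<and> okz (True#True#A) z} = {}"
  proof (intro set_eqI iffI)
    fix w assume a: "w \<in> {z. set z \<subseteq> {0..t} \<and> okz (True#True#A) z}"
    then show "w \<in> {}" by (cases w; cases "tl w"; cases "tl (tl w)") auto
  qed auto
  then show ?case by (metis G.simps(5) card.empty)
qed

fun goodA :: "bool list \<Rightarrow> bool" where
  "goodA [] = True"
| "goodA (False#A) = goodA A"
| "goodA (True#False#A) = goodA A"
| "goodA [True] = False"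
| "goodA (True#True#A) = False"

definition cnt :: "bool list \<Rightarrow> nat" where "cnt A = length (filter id A)"

lemma G_formula: "G t A = (if goodA A then t^(cnt A + 1) * (1+t)^(length A - 2*cnt A) else 0) \<and> (goodA A \<longrightarrow> 2*cnt A \<le> length A)"
proof (induction t A rule: G.induct)
  case (2 t A)
  show ?case
  proof (cases "goodA A")
    case True
    then have le: "2*cnt A \<le> length A" using 2 by simp
    then have "length (False#A) - 2*cnt (False#A) = Suc (length A - 2*cnt A)"
      by (simp add: cnt_def Suc_diff_le)
    then show ?thesis using 2 True le by (simp add: cnt_def algebra_simps)
  next
    case False then show ?thesis using 2 by simp
  qed
next
  case (3 t A)
  show ?case
  proof (cases "goodA A")
    case True
    then have le: "2*cnt A \<le> length A" using 3 by simp
    have c: "cnt (True#False#A) = Suc (cnt A)" by (simp add: cnt_def)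
    have "length (True#False#A) - 2*cnt (True#False#A) = length A - 2*cnt A"
      using c by simp
    then show ?thesis using 3 True le c by simp
  next
    case False then show ?thesis using 3 by simp
  qed
qed (auto simp: cnt_def)

lemma goodA_iff: "goodA A \<longleftrightarrow> (\<forall>i. Suc i < length A \<longrightarrow> \<not> (A!i \<and> A!Suc i)) \<and> (A \<noteq> [] \<longrightarrow> \<not> last A)"
proof (induction A rule: goodA.induct)
  case (2 A)
  have "(\<forall>i. Suc i < length (False#A) \<longrightarrow> \<not> ((False#A)!i \<and> (False#A)!Suc i)) \<longleftrightarrow>
        (\<forall>i. Suc i < length A \<longrightarrow> \<not> (A!i \<and> A!Suc i))"
  proof
    assume L: "\<forall>i. Suc i < length (False#A) \<longrightarrow> \<not> ((False#A)!i \<and> (False#A)!Suc i)"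
    show "\<forall>i. Suc i < length A \<longrightarrow> \<not> (A!i \<and> A!Suc i)"
    proof (intro allI impI)
      fix i assume "Suc i < length A"
      then show "\<not> (A!i \<and> A!Suc i)" using L[rule_format, of "Suc i"] by simp
    qed
  next
    assume R: "\<forall>i. Suc i < length A \<longrightarrow> \<not> (A!i \<and> A!Suc i)"
    show "\<forall>i. Suc i < length (False#A) \<longrightarrow> \<not> ((False#A)!i \<and> (False#A)!Suc i)"
    proof (intro allI impI)
      fix i assume "Suc i < length (False#A)"
      then show "\<not> ((False#A)!i \<and> (False#A)!Suc i)" using R by (cases i) auto
    qed
  qed
  then show ?case using 2 by auto
next
  case (3 A)
  have "(\<forall>i. Suc i < length (True#False#A) \<longrightarrow> \<not> ((True#False#A)!i \<and> (True#False#A)!Suc i)) \<longleftrightarrow>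
        (\<forall>i. Suc i < length A \<longrightarrow> \<not> (A!i \<and> A!Suc i))"
  proof
    assume L: "\<forall>i. Suc i < length (True#False#A) \<longrightarrow> \<not> ((True#False#A)!i \<and> (True#False#A)!Suc i)"
    show "\<forall>i. Suc i < length A \<longrightarrow> \<not> (A!i \<and> A!Suc i)"
    proof (intro allI impI)
      fix i assume "Suc i < length A"
      then show "\<not> (A!i \<and> A!Suc i)" using L[rule_format, of "Suc (Suc i)"] by simp
    qed
  next
    assume R: "\<forall>i. Suc i < length A \<longrightarrow> \<not> (A!i \<and> A!Suc i)"
    show "\<forall>i. Suc i < length (True#False#A) \<longrightarrow> \<not> ((True#False#A)!i \<and> (True#False#A)!Suc i)"
    proof (intro allI impI)
      fix i assume i: "Suc i < length (True#False#A)"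
      show "\<not> ((True#False#A)!i \<and> (True#False#A)!Suc i)"
      proof (cases i)
        case 0 then show ?thesis by simp
      next
        case (Suc j) then show ?thesis using R i by (cases j) auto
      qed
    qed
  qed
  then show ?case using 3 by auto
next
  case 5 then show ?case by force
qed auto

definition asclist :: "('l \<Rightarrow> 'l \<Rightarrow> bool) \<Rightarrow> 'l list \<Rightarrow> bool list" where
  "asclist lle w = map (\<lambda>i. lle (w!i) (w!Suc i)) [0..<length w - 1]"

lemma asclist_len[simp]: "length (asclist lle w) = length w - 1"
  by (simp add: asclist_def)

lemma asclist_nth: "i < length w - 1 \<Longrightarrow> asclist lle w ! i = lle (w!i) (w!Suc i)"
  by (simp add: asclist_def)

lemma cnt_asclist: "cnt (asclist lle w) = asc lle w"
proof -
  have "cnt (asclist lle w) = card {i. i < length (asclist lle w) \<and> id (asclist lle w ! i)}"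
    unfolding cnt_def by (rule length_filter_conv_card)
  also have "{i. i < length (asclist lle w) \<and> id (asclist lle w ! i)} = {i. Suc i < length w \<and> lle (w!i) (w!Suc i)}"
    by (auto simp: asclist_nth)
  finally show ?thesis unfolding asc_def .
qed

lemma word_G:
  assumes "length w = n" "n \<ge> 1"
  shows "G t (asclist lle w) = (if (\<forall>i. i + 2 < n \<longrightarrow> \<not> (lle (w ! i) (w ! (i + 1)) \<and> lle (w ! (i + 1)) (w ! (i + 2))))
        \<and> (n \<ge> 2 \<longrightarrow> \<not> lle (w ! (n - 2)) (w ! (n - 1)))
      then t ^ (asc lle w + 1) * (1 + t) ^ (n - 1 - 2 * asc lle w) else 0)"
proof -
  let ?A = "asclist lle w"
  have g: "goodA ?A \<longleftrightarrow> (\<forall>i. i + 2 < n \<longrightarrow> \<not> (lle (w ! i) (w ! (i + 1)) \<and> lle (w ! (i + 1)) (w ! (i + 2))))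
        \<and> (n \<ge> 2 \<longrightarrow> \<not> lle (w ! (n - 2)) (w ! (n - 1)))"
  proof -
    have a: "(\<forall>i. Suc i < length ?A \<longrightarrow> \<not> (?A!i \<and> ?A!Suc i)) \<longleftrightarrow>
      (\<forall>i. i + 2 < n \<longrightarrow> \<not> (lle (w ! i) (w ! (i + 1)) \<and> lle (w ! (i + 1)) (w ! (i + 2))))"
      using assms by (auto simp: asclist_nth)
    have b: "(?A \<noteq> [] \<longrightarrow> \<not> last ?A) \<longleftrightarrow> (n \<ge> 2 \<longrightarrow> \<not> lle (w ! (n - 2)) (w ! (n - 1)))"
    proof (cases "n \<ge> 2")
      case True
      then have "?A \<noteq> []" using assms by (metis asclist_len diff_is_0_eq length_0_conv not_one_le_zero numeral_le_one_iff semiring_norm(69) Suc_1 not_less_eq_eq)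
      moreover have "last ?A = lle (w ! (n - 2)) (w ! (n - 1))"
        using True assms calculation by (simp add: last_conv_nth asclist_nth Suc_diff_Suc numeral_2_eq_2)
      ultimately show ?thesis using True by simp
    next
      case False
      then have "length ?A = 0" using assms by simp
      then have "?A = []" by blast
      then show ?thesis using False by simp
    qed
    show ?thesis using goodA_iff[of ?A] a b by simp
  qed
  have "G t ?A = (if goodA ?A then t^(cnt ?A + 1) * (1+t)^(length ?A - 2*cnt ?A) else 0)"
    using G_formula by blast
  then show ?thesis by (simp only: g cnt_asclist asclist_len assms(1))
qed

lemma labels_len[simp]: "length (labels lam c) = length c - 1"
  by (simp add: labels_def)

lemma labels_nth: "i < length c - 1 \<Longrightarrow> labels lam c ! i = lam (c!i) (c!Suc i)"
  by (simp add: labels_def)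

lemma all_less_pred: fixes k :: nat assumes "k \<ge> 1" shows "(\<forall>i<k. Q i) \<longleftrightarrow> (\<forall>i<k-1. Q i) \<and> Q (k-1)"
proof -
  obtain j where "k = Suc j" using assms by (cases k) auto
  then show ?thesis by (auto simp: less_Suc_eq)
qed

context RS
begin

lemma ascent_iff:
  fixes lamP :: "'a ext \<Rightarrow> 'a ext \<Rightarrow> 'l" and lle
  assumes d: "d \<in> M" and lz: "length z = n" and n1: "n \<ge> 1"
    and hyp: "lle (labels (\<lambda>x y. lamP (El x) (El y)) d ! (n-1)) (lamP (El top) Top)"
  shows "ascent_free (prod_le lle) (labels (ind_lab lamP) (Psi d z)) \<longleftrightarrow>
         okz (asclist lle (labels (\<lambda>x y. lamP (El x) (El y)) d)) z"
proof -
  let ?w = "labels (\<lambda>x y. lamP (El x) (El y)) d"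
  let ?l = "labels (ind_lab lamP) (Psi d z)"
  define b where "b i = (if z!i = 0 then 0 else (1::nat))" for i
  have ld: "length d = Suc n" using M_len[OF d] .
  have lw: "length ?w = n" using ld by simp
  have ll: "length ?l = Suc n" by simp
  have wi: "\<And>i. i < n \<Longrightarrow> ?w!i = lamP (El (d!i)) (El (d!Suc i))"
    using ld by (simp add: labels_nth)
  have li: "\<And>i. i < n \<Longrightarrow> ?l!i = (?w!i, b i)"
  proof -
    fix i assume i: "i < n"
    have "?l!i = ind_lab lamP (Psi d z ! i) (Psi d z ! Suc i)" using i by (simp add: labels_nth)
    also have "\<dots> = ind_lab lamP (El (d!i, ks z i)) (El (d!Suc i, ks z (Suc i)))"
      using i Psi_nth by simp
    also have "\<dots> = (?w!i, b i)"
      using wi[OF i] ks_Suc[of i z] i lz unfolding b_def by (auto simp: strict_prefix_def)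
    finally show "?l!i = (?w!i, b i)" .
  qed
  have ln: "?l!n = (lamP (El top) Top, 0)"
  proof -
    have "?l!n = ind_lab lamP (Psi d z ! n) (Psi d z ! Suc n)" by (simp add: labels_nth)
    also have "\<dots> = ind_lab lamP (El (d!n, ks z n)) Top" using Psi_nth Psi_last by simp
    finally show ?thesis using M_last[OF d] by simp
  qed
  have af: "ascent_free (prod_le lle) ?l \<longleftrightarrow> (\<forall>i<n. \<not> prod_le lle (?l!i) (?l!Suc i))"
    unfolding ascent_free_def using ll by auto
  also have "\<dots> \<longleftrightarrow> (\<forall>i<n-1. \<not> prod_le lle (?l!i) (?l!Suc i)) \<and> \<not> prod_le lle (?l!(n-1)) (?l!n)"
  proof -
    have sn: "Suc (n-1) = n" using n1 by simp
    show ?thesis using all_less_pred[OF n1, of "\<lambda>i. \<not> prod_le lle (?l!i) (?l!Suc i)"] by (simp only: sn)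
  qed
  also have "\<dots> \<longleftrightarrow> (\<forall>i<n-1. asclist lle ?w ! i \<longrightarrow> z!i \<noteq> 0 \<and> z!Suc i = 0) \<and> z!(n-1) \<noteq> 0"
  proof -
    have "\<And>i. i < n-1 \<Longrightarrow> \<not> prod_le lle (?l!i) (?l!Suc i) \<longleftrightarrow> (asclist lle ?w ! i \<longrightarrow> z!i \<noteq> 0 \<and> z!Suc i = 0)"
    proof -
      fix i assume i: "i < n-1"
      then have "i < n" "Suc i < n" by auto
      then show "\<not> prod_le lle (?l!i) (?l!Suc i) \<longleftrightarrow> (asclist lle ?w ! i \<longrightarrow> z!i \<noteq> 0 \<and> z!Suc i = 0)"
        using li asclist_nth[of i ?w lle] lw i unfolding prod_le_def b_def by auto
    qed
    moreover have "\<not> prod_le lle (?l!(n-1)) (?l!n) \<longleftrightarrow> z!(n-1) \<noteq> 0"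
    proof -
      have "n - 1 < n" "Suc (n-1) = n" using n1 by auto
      then show ?thesis using li[of "n-1"] ln hyp unfolding prod_le_def b_def by auto
    qed
    ultimately show ?thesis by auto
  qed
  also have "\<dots> \<longleftrightarrow> okz (asclist lle ?w) z"
  proof -
    have "z \<noteq> []" using lz n1 by auto
    then have lastz: "last z = z!(n-1)" using lz by (simp add: last_conv_nth)
    have al: "length (asclist lle ?w) = n - 1" using lw by simp
    have e1: "length z = Suc (n-1)" using lz n1 by simp
    show ?thesis unfolding okz_iff al lastz using e1 by blast
  qed
  finally show ?thesis .
qed

end


context SP
begin

lemma hat_cov_El: "covers P le x y \<Longrightarrow> covers (hat_set P) (ext_le le) (El x) (El y)"
  unfolding covers_def hat_set_def by auto

lemma EL_lab_in_L:
  assumes "EL_labeling (hat_set P) (ext_le le) L lle lamP" "covers P le x y"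
  shows "lamP (El x) (El y) \<in> L"
  using assms hat_cov_El unfolding EL_labeling_def by blast

lemma hat_cov_from_El:
  assumes cxt: "covers P le x top" and cv: "covers (hat_set P) (ext_le le) (El x) v"
  shows "v = El top"
proof -
  have xP: "x \<in> P" and xt: "x \<noteq> top" using cxt unfolding covers_def by auto
  have vH: "v \<in> hat_set P" and lev: "ext_le le (El x) v" and vne: "v \<noteq> El x"
    and nb: "\<not> (\<exists>z\<in>hat_set P. ext_le le (El x) z \<and> ext_le le z v \<and> z \<noteq> El x \<and> z \<noteq> v)"
    using cv unfolding covers_def by auto
  show ?thesis
  proof (cases v)
    case Bot then show ?thesis using lev by simp
  next
    case Top
    have "El top \<in> hat_set P" using topP unfolding hat_set_def by auto
    moreover have "ext_le le (El x) (El top)" using letop xP by simp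
    ultimately show ?thesis using nb Top xt by auto
  next
    case (El y)
    have yP: "y \<in> P" using vH El unfolding hat_set_def by auto
    have "le x y" "y \<noteq> x" using lev vne El by auto
    moreover have "le y top" using letop yP by simp
    ultimately have "y = top" using cxt yP unfolding covers_def by blast
    then show ?thesis using El by simp
  qed
qed

lemma hat_cov_from_top:
  assumes cv: "covers (hat_set P) (ext_le le) (El top) v"
  shows "v = Top"
proof (cases v)
  case Bot then show ?thesis using cv unfolding covers_def by simp
next
  case Top then show ?thesis .
next
  case (El y)
  have yP: "y \<in> P" using cv El unfolding covers_def hat_set_def by auto
  have "le top y" "y \<noteq> top" using cv El unfolding covers_def by auto
  then show ?thesis using antisym yP topP letop by blast
qed

lemma hat_no_cov_Top: "\<not> covers (hat_set P) (ext_le le) Top v"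
  unfolding covers_def by auto

lemma hat_chain3:
  assumes cxt: "covers P le x top" and c: "c \<in> mchains (hat_set P) (ext_le le) (El x) Top"
  shows "c = [El x, El top, Top]"
proof -
  have cc: "cover_chain (hat_set P) (ext_le le) c" and hc: "hd c = El x" and lc: "last c = Top"
    using c unfolding mchains_def by auto
  show ?thesis
  proof (cases c)
    case Nil then show ?thesis using cc by simp
  next
    case (Cons a rest)
    show ?thesis
    proof (cases rest)
      case Nil then show ?thesis using Cons hc lc by simp
    next
      case (Cons b rest2)
      have a: "a = El x" using hc \<open>c = a # rest\<close> by simp
      have cab: "covers (hat_set P) (ext_le le) a b" and cc2: "cover_chain (hat_set P) (ext_le le) (b#rest2)"
        using cc \<open>c = a # rest\<close> Cons by auto
      have b: "b = El top" using hat_cov_from_El[OF cxt] cab a by simp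
      show ?thesis
      proof (cases rest2)
        case Nil then show ?thesis using lc \<open>c = a # rest\<close> Cons b by simp
      next
        case (Cons c3 rest3)
        have cbc: "covers (hat_set P) (ext_le le) b c3" and cc3: "cover_chain (hat_set P) (ext_le le) (c3#rest3)"
          using cc2 Cons by auto
        have c3: "c3 = Top" using hat_cov_from_top cbc b by simp
        show ?thesis
        proof (cases rest3)
          case Nil then show ?thesis using \<open>c = a # rest\<close> \<open>rest = b # rest2\<close> Cons a b c3 by simp
        next
          case (Cons c4 rest4)
          then have "covers (hat_set P) (ext_le le) Top c4" using cc3 c3 by auto
          then show ?thesis using hat_no_cov_Top by blast
        qed
      qed
    qed
  qed
qed

lemma EL_last:
  assumes EL: "EL_labeling (hat_set P) (ext_le le) L lle lamP" and cxt: "covers P le x top"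
  shows "lle (lamP (El x) (El top)) (lamP (El top) Top)"
proof -
  have xP: "x \<in> P" using cxt unfolding covers_def by auto
  have "El x \<in> hat_set P" "Top \<in> hat_set P" using xP unfolding hat_set_def by auto
  moreover have "ext_le le (El x) Top" by simp
  ultimately obtain c where c: "c \<in> mchains (hat_set P) (ext_le le) (El x) Top" "weakly_inc lle (labels lamP c)"
    using EL unfolding EL_labeling_def by blast
  have "c = [El x, El top, Top]" using hat_chain3[OF cxt c(1)] .
  then show ?thesis using c(2) unfolding weakly_inc_def labels_def by auto
qed

end

theorem theorem3p5:
  fixes P :: "'a set" and le :: "'a \<Rightarrow> 'a \<Rightarrow> bool"
    and L :: "'l set" and lle :: "'l \<Rightarrow> 'l \<Rightarrow> bool"
    and lamP :: "'a ext \<Rightarrow> 'a ext \<Rightarrow> 'l"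
    and t n :: nat and bot top :: 'a
  assumes "finite P" and "po_on P le" and "semipure P le" and "poset_length P le = n"
    and "bot \<in> P" and "\<forall>y\<in>P. le bot y" and "top \<in> P" and "\<forall>y\<in>P. le y top"
    and "n \<ge> 1" and "t \<ge> 1"
    and "po_on L lle"
    and "EL_labeling (hat_set P) (ext_le le) L lle lamP"
  shows "card {c \<in> mchains (plus_set (rees_set P (prank P le) (tset t n) length))
                    (ext_le (rees_le le (prank P le) prefix length)) (El (bot, [])) Top.
                ascent_free (prod_le lle) (labels (ind_lab lamP) c)}
       = (\<Sum>w \<in> {w \<in> NDA n L lle. (n \<ge> 2 \<longrightarrow> \<not> lle (w ! (n - 2)) (w ! (n - 1)))
                                 \<and> chain_count P le lamP w > 0}.
            chain_count P le lamP w * t ^ (asc lle w + 1) * (1 + t) ^ (n - 1 - 2 * asc lle w))"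
proof -
  interpret SP P le bot top using assms by unfold_locales auto
  have rt: "prank P le top = n" using poset_length_eq assms(4) by simp
  interpret RS P le bot top t n using rt by unfold_locales
  have n1: "n \<ge> 1" and EL: "EL_labeling (hat_set P) (ext_le le) L lle lamP" using assms by auto
  define lab where "lab d = labels (\<lambda>x y. lamP (El x) (El y)) d" for d
  define Z where "Z d = {z. set z \<subseteq> {0..t} \<and> okz (asclist lle (lab d)) z}" for d
  define g where "g w = G t (asclist lle w)" for w
  define cc where "cc w = chain_count P le lamP w" for w
  let ?AF = "{c \<in> mchains X E (El (bot, [])) Top. ascent_free (prod_le lle) (labels (ind_lab lamP) c)}"
  have lablen: "\<And>d. d \<in> M \<Longrightarrow> length (lab d) = n" unfolding lab_def using M_len by simp
  have labnth: "\<And>d i. d \<in> M \<Longrightarrow> i < n \<Longrightarrow> lab d ! i = lamP (El (d!i)) (El (d!Suc i))"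
    unfolding lab_def using M_len by (simp add: labels_nth)
  have hyp: "\<And>d. d \<in> M \<Longrightarrow> lle (lab d ! (n-1)) (lamP (El top) Top)"
  proof -
    fix d assume d: "d \<in> M"
    have "n - 1 < n" "Suc (n-1) = n" using n1 by auto
    then have "covers P le (d!(n-1)) (d!Suc (n-1))" using M_cov[OF d, of "n-1"] by blast
    then have "covers P le (d!(n-1)) top" using M_last[OF d] n1 by simp
    then show "lle (lab d ! (n-1)) (lamP (El top) Top)"
      using EL_last[OF EL] labnth[OF d, of "n-1"] n1 M_last[OF d] by simp
  qed
  have labL: "\<And>d. d \<in> M \<Longrightarrow> set (lab d) \<subseteq> L"
  proof
    fix d x assume d: "d \<in> M" and "x \<in> set (lab d)"
    then obtain i where i: "i < n" "x = lab d ! i" using lablen by (auto simp: in_set_conv_nth)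
    then show "x \<in> L" using labnth[OF d i(1)] EL_lab_in_L[OF EL M_cov[OF d i(1)]] by simp
  qed
  have Zlen: "\<And>d z. d \<in> M \<Longrightarrow> z \<in> Z d \<Longrightarrow> length z = n"
    unfolding Z_def using okz_iff lablen n1 by auto
  have AF_eq: "?AF = (\<lambda>(d,z). Psi d z) ` (SIGMA d:M. Z d)"
  proof (intro set_eqI iffI)
    fix c assume "c \<in> ?AF"
    then have cm: "c \<in> mchains X E (El (bot, [])) Top" and af: "ascent_free (prod_le lle) (labels (ind_lab lamP) c)"
      by auto
    obtain d z where dz: "d \<in> M" "length z = n" "set z \<subseteq> {0..t}" "c = Psi d z"
      using Psi_surj[OF cm] by blast
    have "okz (asclist lle (lab d)) z"
      using ascent_iff[OF dz(1) dz(2) n1, of lle lamP] hyp[OF dz(1)] af dz(4) unfolding lab_def by simp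
    then have "z \<in> Z d" using dz unfolding Z_def by simp
    then show "c \<in> (\<lambda>(d,z). Psi d z) ` (SIGMA d:M. Z d)" using dz by auto
  next
    fix c assume "c \<in> (\<lambda>(d,z). Psi d z) ` (SIGMA d:M. Z d)"
    then obtain d z where dz: "d \<in> M" "z \<in> Z d" "c = Psi d z" by auto
    have lz: "length z = n" using Zlen dz by simp
    have sz: "set z \<subseteq> {0..t}" "okz (asclist lle (lab d)) z" using dz unfolding Z_def by auto
    have "ascent_free (prod_le lle) (labels (ind_lab lamP) c)"
      using ascent_iff[OF dz(1) lz n1, of lle lamP] hyp[OF dz(1)] sz dz(3) unfolding lab_def by simp
    moreover have "c \<in> mchains X E (El (bot, [])) Top" using Psi_mem[OF dz(1) lz sz(1)] dz(3) by simp
    ultimately show "c \<in> ?AF" by simp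
  qed
  have inj: "inj_on (\<lambda>(d,z). Psi d z) (SIGMA d:M. Z d)"
  proof (rule inj_onI)
    fix p q assume p: "p \<in> (SIGMA d:M. Z d)" and q: "q \<in> (SIGMA d:M. Z d)"
      and eq: "(\<lambda>(d,z). Psi d z) p = (\<lambda>(d,z). Psi d z) q"
    obtain d z where pd: "p = (d,z)" by fastforce
    obtain d' z' where qd: "q = (d',z')" by fastforce
    show "p = q" using Psi_inj[of d d' z z'] p q eq pd qd Zlen by auto
  qed
  have finM: "finite M"
  proof (rule finite_subset)
    show "M \<subseteq> {d. set d \<subseteq> P \<and> length d = Suc n}"
      using M_len maxchains_iff cover_chain_set by blast
    show "finite {d. set d \<subseteq> P \<and> length d = Suc n}" using fin by (rule finite_lists_length_eq)
  qed
  have finZ: "\<And>d. d \<in> M \<Longrightarrow> finite (Z d)"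
  proof -
    fix d assume d: "d \<in> M"
    show "finite (Z d)"
    proof (rule finite_subset)
      show "Z d \<subseteq> {z. set z \<subseteq> {0..t} \<and> length z = n}" using Zlen[OF d] unfolding Z_def by blast
      show "finite {z. set z \<subseteq> {0..t} \<and> length z = n}" by (rule finite_lists_length_eq) simp
    qed
  qed
  have "card ?AF = card (SIGMA d:M. Z d)"
    unfolding AF_eq by (rule card_image[OF inj])
  also have "\<dots> = (\<Sum>d\<in>M. card (Z d))" using finM finZ by simp
  also have "\<dots> = (\<Sum>d\<in>M. g (lab d))" unfolding Z_def g_def by (simp add: card_okz)
  also have "\<dots> = (\<Sum>w\<in>lab ` M. (\<Sum>d\<in>{x\<in>M. lab x = w}. g (lab d)))"
    by (rule sum.image_gen[OF finM])
  also have "\<dots> = (\<Sum>w\<in>lab ` M. cc w * g w)"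
  proof (rule sum.cong)
    fix w assume "w \<in> lab ` M"
    have "(\<Sum>d\<in>{x\<in>M. lab x = w}. g (lab d)) = (\<Sum>d\<in>{x\<in>M. lab x = w}. g w)" by simp
    also have "\<dots> = card {x\<in>M. lab x = w} * g w" by simp
    also have "card {x\<in>M. lab x = w} = cc w" unfolding cc_def chain_count_def lab_def by simp
    finally show "(\<Sum>d\<in>{x\<in>M. lab x = w}. g (lab d)) = cc w * g w" .
  qed simp
  also have "\<dots> = (\<Sum>w \<in> {w \<in> NDA n L lle. (n \<ge> 2 \<longrightarrow> \<not> lle (w ! (n - 2)) (w ! (n - 1)))
                                 \<and> chain_count P le lamP w > 0}.
            chain_count P le lamP w * t ^ (asc lle w + 1) * (1 + t) ^ (n - 1 - 2 * asc lle w))"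
  proof (rule sum.mono_neutral_cong_right)
    show "finite (lab ` M)" using finM by simp
    show "{w \<in> NDA n L lle. (n \<ge> 2 \<longrightarrow> \<not> lle (w ! (n - 2)) (w ! (n - 1))) \<and> chain_count P le lamP w > 0} \<subseteq> lab ` M"
    proof
      fix w assume "w \<in> {w \<in> NDA n L lle. (n \<ge> 2 \<longrightarrow> \<not> lle (w ! (n - 2)) (w ! (n - 1))) \<and> chain_count P le lamP w > 0}"
      then have "card {x\<in>M. lab x = w} > 0" unfolding chain_count_def lab_def by simp
      then have "{x\<in>M. lab x = w} \<noteq> {}" by (metis card.empty less_irrefl)
      then obtain d where "d \<in> M" "lab d = w" by blast
      then show "w \<in> lab ` M" by blast
    qed
    show "\<forall>w\<in>lab ` M - {w \<in> NDA n L lle. (n \<ge> 2 \<longrightarrow> \<not> lle (w ! (n - 2)) (w ! (n - 1))) \<and> chain_count P le lamP w > 0}. cc w * g w = 0"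
    proof
      fix w assume w: "w \<in> lab ` M - {w \<in> NDA n L lle. (n \<ge> 2 \<longrightarrow> \<not> lle (w ! (n - 2)) (w ! (n - 1))) \<and> chain_count P le lamP w > 0}"
      then obtain d where d: "d \<in> M" "w = lab d" by blast
      have lw: "length w = n" and sw: "set w \<subseteq> L" using d lablen labL by auto
      have "d \<in> {x\<in>M. lab x = w}" using d by simp
      moreover have "finite {x\<in>M. lab x = w}" using finM by simp
      ultimately have "card {x\<in>M. lab x = w} > 0" using card_gt_0_iff by blast
      then have ccp: "chain_count P le lamP w > 0" unfolding chain_count_def lab_def by simp
      have notW: "\<not> (w \<in> NDA n L lle \<and> (n \<ge> 2 \<longrightarrow> \<not> lle (w ! (n - 2)) (w ! (n - 1))) \<and> chain_count P le lamP w > 0)"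
        using w by blast
      have nda: "w \<in> NDA n L lle \<longleftrightarrow> (\<forall>i. i + 2 < n \<longrightarrow> \<not> (lle (w ! i) (w ! (i + 1)) \<and> lle (w ! (i + 1)) (w ! (i + 2))))"
        unfolding NDA_def using lw sw by blast
      have notC: "\<not> ((\<forall>i. i + 2 < n \<longrightarrow> \<not> (lle (w ! i) (w ! (i + 1)) \<and> lle (w ! (i + 1)) (w ! (i + 2))))
        \<and> (n \<ge> 2 \<longrightarrow> \<not> lle (w ! (n - 2)) (w ! (n - 1))))"
        using notW nda ccp by blast
      have "g w = 0" unfolding g_def word_G[OF lw n1, of t lle] by (rule if_not_P[OF notC])
      then show "cc w * g w = 0" by simp
    qed
    fix w assume w: "w \<in> {w \<in> NDA n L lle. (n \<ge> 2 \<longrightarrow> \<not> lle (w ! (n - 2)) (w ! (n - 1))) \<and> chain_count P le lamP w > 0}"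
    then have lw: "length w = n" unfolding NDA_def by simp
    have C: "(\<forall>i. i + 2 < n \<longrightarrow> \<not> (lle (w ! i) (w ! (i + 1)) \<and> lle (w ! (i + 1)) (w ! (i + 2))))
        \<and> (n \<ge> 2 \<longrightarrow> \<not> lle (w ! (n - 2)) (w ! (n - 1)))"
      using w unfolding NDA_def by blast
    have "g w = t ^ (asc lle w + 1) * (1 + t) ^ (n - 1 - 2 * asc lle w)"
      unfolding g_def word_G[OF lw n1, of t lle] by (rule if_P[OF C])
    then show "cc w * g w = chain_count P le lamP w * t ^ (asc lle w + 1) * (1 + t) ^ (n - 1 - 2 * asc lle w)"
      unfolding cc_def by (simp add: mult.assoc)
  qed
  finally show ?thesis .
qed

end
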